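(* Let $\Lambda$ be a set of positive integers such that for all positive integers $a,b$: $a,b\in\Lambda$ if and only if $\operatorname{lcm}(a,b)\in\Lambda$. Put $\Lambda'=\Lambda\cup\{2x:x\in\Lambda\}$. Suppose $\sigma=(\varepsilon,\beta,\gamma;(12))$ is an autoparatopism of a Latin square $L$ of order $n$. Let $R_\Lambda=\{i\in[n]:o_\beta(i)\in\Lambda\}$ and $S_{\Lambda'}=\{i\in[n]:o_\gamma(i)\in\Lambda'\}$. If $R_\Lambda\neq\emptyset$, then $|R_\Lambda|=|S_{\Lambda'}|$, and the submatrix of $L$ with rows $R_\Lambda$ and columns $R_\Lambda$ is a subsquare of $L$ whose symbol set is $S_{\Lambda'}$.
   Context: A Latin square $L$ of order $n$ is an $n\times n$ array with rows, columns and symbols indexed by $[n]$, in which each symbol occurs exactly once in each row and each column. Its set of triples is $O(L)$. A subsquare is a submatrix (a set of rows $R$ and columns $C$) that is itself a Latin square, i.e. whose cells contain exactly $|R|=|C|$ distinct symbols. Permutations act on the right; $\varepsilon$ is the identity. A paratopism $(\alpha,\beta,\gamma;(12))$ maps $L$ to $L^\sigma$ with triple set $\{(y\beta,x\alpha,z\gamma):(x,y,z)\in O(L)\}$. It is an autoparatopism of $L$ if $L^\sigma=L$. $o_\pi(i)$ is the length of the cycle of $\pi$ containing $i$ (fixed points are cycles of length $1$). *)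

theory Defs
  imports "HOL-Combinatorics.Permutations"
begin

text \<open>Rows, columns and symbols are indexed by [n] = {0..<n}.
A Latin square of order n is a function L giving the symbol in cell (x,y).\<close>

definition latin_square :: "nat \<Rightarrow> (nat \<Rightarrow> nat \<Rightarrow> nat) \<Rightarrow> bool" where
  "latin_square n L \<longleftrightarrow>
     (\<forall>x<n. \<forall>y<n. L x y < n) \<and>
     (\<forall>x<n. inj_on (L x) {0..<n}) \<and>
     (\<forall>y<n. inj_on (\<lambda>x. L x y) {0..<n})"

definition triples :: "nat \<Rightarrow> (nat \<Rightarrow> nat \<Rightarrow> nat) \<Rightarrow> (nat \<times> nat \<times> nat) set" where
  "triples n L = {(x, y, L x y) | x y. x < n \<and> y < n}"

text \<open>Paratopism (alpha, beta, gamma; (12)) applied to L, permutations acting on the right.\<close>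
definition paratope12 ::
  "(nat \<Rightarrow> nat) \<Rightarrow> (nat \<Rightarrow> nat) \<Rightarrow> (nat \<Rightarrow> nat) \<Rightarrow> (nat \<times> nat \<times> nat) set \<Rightarrow> (nat \<times> nat \<times> nat) set" where
  "paratope12 \<alpha> \<beta> \<gamma> T = {(\<beta> y, \<alpha> x, \<gamma> z) | x y z. (x, y, z) \<in> T}"

definition autoparatopism12 ::
  "nat \<Rightarrow> (nat \<Rightarrow> nat \<Rightarrow> nat) \<Rightarrow> (nat \<Rightarrow> nat) \<Rightarrow> (nat \<Rightarrow> nat) \<Rightarrow> (nat \<Rightarrow> nat) \<Rightarrow> bool" where
  "autoparatopism12 n L \<alpha> \<beta> \<gamma> \<longleftrightarrow>
     \<alpha> permutes {0..<n} \<and> \<beta> permutes {0..<n} \<and> \<gamma> permutes {0..<n} \<and>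
     paratope12 \<alpha> \<beta> \<gamma> (triples n L) = triples n L"

definition cycle_len :: "(nat \<Rightarrow> nat) \<Rightarrow> nat \<Rightarrow> nat" where
  "cycle_len \<pi> i = (LEAST k. 0 < k \<and> (\<pi> ^^ k) i = i)"

definition symbols_of :: "(nat \<Rightarrow> nat \<Rightarrow> nat) \<Rightarrow> nat set \<Rightarrow> nat set \<Rightarrow> nat set" where
  "symbols_of L R C = {L x y | x y. x \<in> R \<and> y \<in> C}"

definition subsquare :: "nat \<Rightarrow> (nat \<Rightarrow> nat \<Rightarrow> nat) \<Rightarrow> nat set \<Rightarrow> nat set \<Rightarrow> bool" where
  "subsquare n L R C \<longleftrightarrow> R \<subseteq> {0..<n} \<and> C \<subseteq> {0..<n} \<and>
     card R = card C \<and> card (symbols_of L R C) = card R"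

end

theory Submission
  imports Defs
begin

lemma funpow_mult_fix:
  assumes "(f ^^ c) i = i" shows "(f ^^ (c * q)) i = i"
proof (induction q)
  case 0 then show ?case by simp
next
  case (Suc q)
  have "(f ^^ (c * Suc q)) i = (f ^^ c) ((f ^^ (c * q)) i)"
    by (simp add: funpow_add)
  then show ?case using assms Suc by simp
qed

lemma cycle_len_props:
  assumes "p permutes {0..<n}"
  shows "0 < cycle_len p i \<and> (\<forall>k. (p ^^ k) i = i \<longleftrightarrow> cycle_len p i dvd k)"
proof -
  have perm: "permutation p" using assms permutes_imp_permutation by blast
  obtain m where m: "m > 0" "(p ^^ m) i = i" using permutation_self[OF perm] by blast
  let ?c = "cycle_len p i"
  have c: "0 < ?c \<and> (p ^^ ?c) i = i"
    unfolding cycle_len_def by (rule LeastI[of _ m]) (use m in auto)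
  have le: "?c \<le> k" if "0 < k" "(p ^^ k) i = i" for k
    unfolding cycle_len_def by (rule Least_le) (use that in auto)
  have "(p ^^ k) i = i \<longleftrightarrow> ?c dvd k" for k
  proof
    assume h: "(p ^^ k) i = i"
    have k: "k = k mod ?c + ?c * (k div ?c)" by simp
    have "(p ^^ k) i = (p ^^ (k mod ?c + ?c * (k div ?c))) i" by (simp only: mod_mult_div_eq)
    also have "\<dots> = (p ^^ (k mod ?c)) ((p ^^ (?c * (k div ?c))) i)"
      by (simp only: funpow_add o_apply)
    also have "\<dots> = (p ^^ (k mod ?c)) i" using funpow_mult_fix[where f=p and c="?c" and i=i] c by simp
    finally have h2: "(p ^^ (k mod ?c)) i = i" using h by simp
    have "k mod ?c < ?c" using c by simp
    then have "k mod ?c = 0" using le[of "k mod ?c"] h2 by (metis not_gr0 not_le)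
    then show "?c dvd k" by (simp add: dvd_eq_mod_eq_0)
  next
    assume "?c dvd k"
    then obtain q where "k = ?c * q" by blast
    then show "(p ^^ k) i = i" using funpow_mult_fix[where f=p and c="?c" and i=i] c by simp
  qed
  then show ?thesis using c by blast
qed

lemma lam_dvd:
  assumes lcm_closed: "\<And>a b. 0 < a \<Longrightarrow> 0 < b \<Longrightarrow> (a \<in> \<Lambda> \<and> b \<in> \<Lambda> \<longleftrightarrow> lcm a b \<in> \<Lambda>)"
    and "k \<in> \<Lambda>" "0 < k" "d dvd k" "0 < (d::nat)"
  shows "d \<in> \<Lambda>"
proof -
  have "lcm d k = k" using assms(4) by (simp add: lcm_proj2_if_dvd_nat)
  then show ?thesis using lcm_closed[of d k] assms by simp
qed

lemma lam_dvd2: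
  assumes lcm_closed: "\<And>a b. 0 < a \<Longrightarrow> 0 < b \<Longrightarrow> (a \<in> \<Lambda> \<and> b \<in> \<Lambda> \<longleftrightarrow> lcm a b \<in> \<Lambda>)"
    and "k \<in> \<Lambda>" "0 < k" "d dvd 2 * k" "0 < (d::nat)"
  shows "d \<in> \<Lambda> \<union> {2 * x | x. x \<in> \<Lambda>}"
proof (cases "d dvd k")
  case True then show ?thesis using lam_dvd[OF lcm_closed] assms by blast
next
  case False
  have "even d"
  proof (rule ccontr)
    assume "odd d"
    then have "coprime d 2" by simp
    then have "d dvd k" using assms(4) coprime_dvd_mult_right_iff by blast
    then show False using False by simp
  qed
  then obtain e where e: "d = 2 * e" by blast
  then have "e dvd k" using assms(4) by simp
  then have "e \<in> \<Lambda>" using lam_dvd[OF lcm_closed] assms e by simp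
  then show ?thesis using e by blast
qed

theorem theorem3p4:
  fixes \<Lambda> :: "nat set" and n :: nat and L :: "nat \<Rightarrow> nat \<Rightarrow> nat"
    and \<beta> \<gamma> :: "nat \<Rightarrow> nat"
  assumes pos: "\<Lambda> \<subseteq> {k. 0 < k}"
    and lcm_closed: "\<And>a b. 0 < a \<Longrightarrow> 0 < b \<Longrightarrow> (a \<in> \<Lambda> \<and> b \<in> \<Lambda> \<longleftrightarrow> lcm a b \<in> \<Lambda>)"
    and latin: "latin_square n L"
    and auto: "autoparatopism12 n L id \<beta> \<gamma>"
    and nonempty: "{i \<in> {0..<n}. cycle_len \<beta> i \<in> \<Lambda>} \<noteq> {}"
  shows "card {i \<in> {0..<n}. cycle_len \<beta> i \<in> \<Lambda>}
           = card {i \<in> {0..<n}. cycle_len \<gamma> i \<in> \<Lambda> \<union> {2 * x | x. x \<in> \<Lambda>}}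
       \<and> subsquare n L {i \<in> {0..<n}. cycle_len \<beta> i \<in> \<Lambda>} {i \<in> {0..<n}. cycle_len \<beta> i \<in> \<Lambda>}
       \<and> symbols_of L {i \<in> {0..<n}. cycle_len \<beta> i \<in> \<Lambda>} {i \<in> {0..<n}. cycle_len \<beta> i \<in> \<Lambda>}
           = {i \<in> {0..<n}. cycle_len \<gamma> i \<in> \<Lambda> \<union> {2 * x | x. x \<in> \<Lambda>}}"
proof -
  define R where "R = {i \<in> {0..<n}. cycle_len \<beta> i \<in> \<Lambda>}"
  define S where "S = {i \<in> {0..<n}. cycle_len \<gamma> i \<in> \<Lambda> \<union> {2 * x | x. x \<in> \<Lambda>}}"
  have bp: "\<beta> permutes {0..<n}" and gp: "\<gamma> permutes {0..<n}"
   and eq: "paratope12 id \<beta> \<gamma> (triples n L) = triples n L"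
    using auto unfolding autoparatopism12_def by auto
  have Lr: "L x y < n" if "x < n" "y < n" for x y using latin that unfolding latin_square_def by auto
  have rowinj: "inj_on (L x) {0..<n}" if "x < n" for x using latin that unfolding latin_square_def by auto
  have base: "L (\<beta> y) x = \<gamma> (L x y)" if "x < n" "y < n" for x y
  proof -
    have "(\<beta> y, x, \<gamma> (L x y)) \<in> paratope12 id \<beta> \<gamma> (triples n L)"
      unfolding paratope12_def triples_def using that by force
    then have "(\<beta> y, x, \<gamma> (L x y)) \<in> triples n L" using eq by simp
    then show ?thesis unfolding triples_def by auto
  qed
  have bin: "(\<beta> ^^ k) x < n" if "x < n" for k x
    using permutes_in_funpow_image[OF bp, of x k] that by simp
  have two: "L (\<beta> x) (\<beta> y) = \<gamma> (\<gamma> (L x y))" if "x < n" "y < n" for x y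
    using base[of x y] base[of "\<beta> y" x] that bin[of y 1] by simp
  have iter: "L ((\<beta> ^^ k) x) ((\<beta> ^^ k) y) = (\<gamma> ^^ (2 * k)) (L x y)" if "x < n" "y < n" for k x y
  proof (induction k)
    case 0 then show ?case by simp
  next
    case (Suc k)
    have "L ((\<beta> ^^ Suc k) x) ((\<beta> ^^ Suc k) y) = \<gamma> (\<gamma> (L ((\<beta> ^^ k) x) ((\<beta> ^^ k) y)))"
      using two[OF bin[OF that(1)] bin[OF that(2)]] by simp
    then show ?case using Suc by simp
  qed
  note cb = cycle_len_props[OF bp] and cg = cycle_len_props[OF gp]
  have g0: "\<And>i. 0 < cycle_len \<gamma> i" using cg by blast
  have lpos: "0 < lcm a b" if "0 < a" "0 < b" for a b :: nat using that by (simp add: lcm_pos_nat)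
  have sub: "L x y \<in> S" if "x \<in> R" "y \<in> R" for x y
  proof -
    let ?a = "cycle_len \<beta> x" and ?b = "cycle_len \<beta> y"
    have a: "0 < ?a" "?a \<in> \<Lambda>" and b: "0 < ?b" "?b \<in> \<Lambda>" and xy: "x < n" "y < n"
      using that cb unfolding R_def by auto
    let ?m = "lcm ?a ?b"
    have m: "?m \<in> \<Lambda>" "0 < ?m" using lcm_closed[of ?a ?b] a b lpos by auto
    have "(\<beta> ^^ ?m) x = x" "(\<beta> ^^ ?m) y = y" using cb by auto
    then have "(\<gamma> ^^ (2 * ?m)) (L x y) = L x y" using iter[OF xy, of ?m] by simp
    then have d: "cycle_len \<gamma> (L x y) dvd 2 * ?m" using cg by blast
    have "cycle_len \<gamma> (L x y) \<in> \<Lambda> \<union> {2 * x | x. x \<in> \<Lambda>}"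
      by (rule lam_dvd2[OF lcm_closed m d g0])
    then show ?thesis unfolding S_def using Lr xy by auto
  qed
  have sup: "\<exists>y\<in>R. L x y = z" if "x \<in> R" "z \<in> S" for x z
  proof -
    have xn: "x < n" and zn: "z < n" using that unfolding R_def S_def by auto
    have "L x ` {0..<n} = {0..<n}"
      using rowinj[OF xn] Lr[OF xn] by (intro endo_inj_surj) auto
    then obtain y where y: "y < n" "L x y = z" using zn by (metis atLeastLessThan_iff image_iff zero_le)
    let ?a = "cycle_len \<beta> x" and ?c = "cycle_len \<gamma> z"
    have a: "0 < ?a" "?a \<in> \<Lambda>" using that cb unfolding R_def by auto
    have cS: "?c \<in> \<Lambda> \<union> {2 * x | x. x \<in> \<Lambda>}" using that(2) unfolding S_def by auto
    obtain c' where c': "c' \<in> \<Lambda>" "?c dvd 2 * c'"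
    proof (cases "?c \<in> \<Lambda>")
      case True then show ?thesis using that[of ?c] by simp
    next
      case False then obtain x where "x \<in> \<Lambda>" "?c = 2 * x" using cS by blast
      then show ?thesis using that[of x] by simp
    qed
    have c'p: "0 < c'" using pos c' by auto
    let ?k = "lcm ?a c'"
    have k: "?k \<in> \<Lambda>" "0 < ?k" using lcm_closed[of ?a c'] a c' c'p lpos by auto
    have "(\<beta> ^^ ?k) x = x" using cb by auto
    moreover have "(\<gamma> ^^ (2 * ?k)) z = z"
      using cg c' by (meson dvd_lcm2 dvd_trans mult_dvd_mono dvd_refl)
    ultimately have "L x ((\<beta> ^^ ?k) y) = L x y" using iter[OF xn y(1), of ?k] y by simp
    then have "(\<beta> ^^ ?k) y = y" using rowinj[OF xn] bin[OF y(1)] y(1)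
      by (meson atLeastLessThan_iff inj_on_def zero_le)
    then have "cycle_len \<beta> y dvd ?k" using cb by blast
    then have "cycle_len \<beta> y \<in> \<Lambda>" using lam_dvd[OF lcm_closed k] cb by blast
    then show ?thesis using y unfolding R_def by auto
  qed
  obtain x0 where x0: "x0 \<in> R" using nonempty unfolding R_def by auto
  have Rsub: "R \<subseteq> {0..<n}" unfolding R_def by auto
  have rowimg: "L x0 ` R = S" using sub sup x0 by blast
  have cardR: "card R = card S"
  proof -
    have "inj_on (L x0) R" using rowinj[of x0] x0 Rsub inj_on_subset by (metis atLeastLessThan_iff subsetD)
    then show ?thesis using rowimg card_image by fastforce
  qed
  have sym: "symbols_of L R R = S"
    unfolding symbols_of_def using sub sup x0 by blast
  show ?thesis
    unfolding R_def[symmetric] S_def[symmetric] subsquare_def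
    using cardR sym Rsub by simp
qed

end
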